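(* Let $B$ be a supersoluble brace, and let $I$ be an ideal of $B$ which is centrally nilpotent (as a brace). Then $I$ is $B$-centrally nilpotent.
   Context: A brace (skew left brace) is a set $B$ with two binary operations $+$ and $\cdot$ such that $(B,+)$ and $(B,\cdot)$ are groups and $a(b+c)=ab-a+ac$ for all $a,b,c\in B$. $\lambda_a(b)=-a+ab$ defines a homomorphism $\lambda\colon(B,\cdot)\to\operatorname{Aut}(B,+)$. An ideal is a subset that is a subgroup of both groups, normal in both, and invariant under all $\lambda_b$; quotients by ideals are braces, and an ideal is itself a brace. $\operatorname{Soc}(B)=\operatorname{Ker}\lambda\cap Z(B,+)$ and $\zeta(B)=\operatorname{Soc}(B)\cap Z(B,\cdot)$ (both ideals). The upper central series is $\zeta_0(B)=\{0\}$, $\zeta_{k+1}(B)/\zeta_k(B)=\zeta(B/\zeta_k(B))$; $B$ is centrally nilpotent if $B=\zeta_m(B)$ for some $m$. An ideal $I$ of $B$ is $B$-centrally nilpotent if there is a finite chain $\{0\}=I_0\le\dots\le I_n=I$ of ideals of $B$ with $I_{i+1}/I_i\le\zeta(I/I_i)$ for all $i$. $B$ is supersoluble if there is a finite chain of ideals $\{0\}=J_0\le\dots\le J_n=B$ such that for each $i$, either $(J_{i+1}/J_i,+)$ is infinite cyclic and $J_{i+1}/J_i\le\operatorname{Soc}(B/J_i)$, or $J_{i+1}/J_i$ has prime order. *)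

theory Defs
  imports "HOL-Algebra.Algebra" "HOL-Computational_Algebra.Primes"
begin

text \<open>A (skew left) brace: a carrier with an addition, a multiplication and a common
identity element (the additive and multiplicative identities of a brace coincide).\<close>
record 'a brace = "'a partial_object" +
  badd :: "'a \<Rightarrow> 'a \<Rightarrow> 'a"
  bmul :: "'a \<Rightarrow> 'a \<Rightarrow> 'a"
  bzero :: 'a

definition add_group :: "('a, 'b) brace_scheme \<Rightarrow> 'a monoid" where
  "add_group B = \<lparr>carrier = carrier B, monoid.mult = badd B, one = bzero B\<rparr>"

definition mul_group :: "('a, 'b) brace_scheme \<Rightarrow> 'a monoid" where
  "mul_group B = \<lparr>carrier = carrier B, monoid.mult = bmul B, one = bzero B\<rparr>"

definition bneg :: "('a, 'b) brace_scheme \<Rightarrow> 'a \<Rightarrow> 'a" where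
  "bneg B x = inv\<^bsub>add_group B\<^esub> x"

definition blambda :: "('a, 'b) brace_scheme \<Rightarrow> 'a \<Rightarrow> 'a \<Rightarrow> 'a" where
  "blambda B a b = badd B (bneg B a) (bmul B a b)"

definition is_brace :: "('a, 'b) brace_scheme \<Rightarrow> bool" where
  "is_brace B \<longleftrightarrow> group (add_group B) \<and> group (mul_group B) \<and>
     (\<forall>a\<in>carrier B. \<forall>b\<in>carrier B. \<forall>c\<in>carrier B.
        bmul B a (badd B b c) = badd B (badd B (bmul B a b) (bneg B a)) (bmul B a c))"

definition brace_ideal :: "('a, 'b) brace_scheme \<Rightarrow> 'a set \<Rightarrow> bool" where
  "brace_ideal B I \<longleftrightarrow> I \<subseteq> carrier B \<and>
     I \<lhd> add_group B \<and> I \<lhd> mul_group B \<and>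
     (\<forall>b\<in>carrier B. \<forall>x\<in>I. blambda B b x \<in> I)"

definition sub_brace :: "('a, 'b) brace_scheme \<Rightarrow> 'a set \<Rightarrow> 'a brace" where
  "sub_brace B I = \<lparr>carrier = I, badd = badd B, bmul = bmul B, bzero = bzero B\<rparr>"

text \<open>Quotient brace B/J: elements are the cosets of J (additive cosets; for an ideal
they coincide with the multiplicative ones), operations are the set products.\<close>
definition quot_brace :: "('a, 'b) brace_scheme \<Rightarrow> 'a set \<Rightarrow> 'a set brace" where
  "quot_brace B J = \<lparr>carrier = RCOSETS (add_group B) J,
      badd = set_mult (add_group B),
      bmul = set_mult (mul_group B),
      bzero = J\<rparr>"

definition bcoset :: "('a, 'b) brace_scheme \<Rightarrow> 'a set \<Rightarrow> 'a \<Rightarrow> 'a set" where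
  "bcoset B J x = r_coset (add_group B) J x"

definition Soc :: "('a, 'b) brace_scheme \<Rightarrow> 'a set" where
  "Soc B = {a \<in> carrier B. (\<forall>b\<in>carrier B. blambda B a b = b) \<and>
                           (\<forall>b\<in>carrier B. badd B a b = badd B b a)}"

definition zeta :: "('a, 'b) brace_scheme \<Rightarrow> 'a set" where
  "zeta B = {a \<in> Soc B. \<forall>b\<in>carrier B. bmul B a b = bmul B b a}"

definition Soc_mod :: "('a, 'b) brace_scheme \<Rightarrow> 'a set \<Rightarrow> 'a set" where
  "Soc_mod B J = {x \<in> carrier B. bcoset B J x \<in> Soc (quot_brace B J)}"

definition zeta_mod :: "('a, 'b) brace_scheme \<Rightarrow> 'a set \<Rightarrow> 'a set" where
  "zeta_mod B J = {x \<in> carrier B. bcoset B J x \<in> zeta (quot_brace B J)}"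

fun upper_zeta :: "('a, 'b) brace_scheme \<Rightarrow> nat \<Rightarrow> 'a set" where
  "upper_zeta B 0 = {bzero B}"
| "upper_zeta B (Suc k) = zeta_mod B (upper_zeta B k)"

definition centrally_nilpotent :: "('a, 'b) brace_scheme \<Rightarrow> bool" where
  "centrally_nilpotent B \<longleftrightarrow> (\<exists>m. upper_zeta B m = carrier B)"

definition B_centrally_nilpotent :: "('a, 'b) brace_scheme \<Rightarrow> 'a set \<Rightarrow> bool" where
  "B_centrally_nilpotent B I \<longleftrightarrow>
     (\<exists>(n::nat) (Is :: nat \<Rightarrow> 'a set). Is 0 = {bzero B} \<and> Is n = I \<and>
        (\<forall>i\<le>n. brace_ideal B (Is i)) \<and>
        (\<forall>i<n. Is i \<subseteq> Is (Suc i) \<and> Is (Suc i) \<subseteq> zeta_mod (sub_brace B I) (Is i)))"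

definition factor :: "('a, 'b) brace_scheme \<Rightarrow> 'a set \<Rightarrow> 'a set \<Rightarrow> 'a set brace" where
  "factor B J' J = quot_brace (sub_brace B J') J"

definition supersoluble :: "('a, 'b) brace_scheme \<Rightarrow> bool" where
  "supersoluble B \<longleftrightarrow>
     (\<exists>(n::nat) (Js :: nat \<Rightarrow> 'a set). Js 0 = {bzero B} \<and> Js n = carrier B \<and>
        (\<forall>i\<le>n. brace_ideal B (Js i)) \<and>
        (\<forall>i<n. Js i \<subseteq> Js (Suc i) \<and>
           ((infinite (carrier (factor B (Js (Suc i)) (Js i))) \<and>
             cyclic_group (add_group (factor B (Js (Suc i)) (Js i))) \<and>
             Js (Suc i) \<subseteq> Soc_mod B (Js i))
            \<or> Factorial_Ring.prime (card (carrier (factor B (Js (Suc i)) (Js i)))))))"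

end

theory Submission
  imports Defs
begin


lemma add_group_simps [simp]:
  "carrier (add_group B) = carrier B" "monoid.mult (add_group B) = badd B" "one (add_group B) = bzero B"
  by (simp_all add: add_group_def)

lemma mul_group_simps [simp]:
  "carrier (mul_group B) = carrier B" "monoid.mult (mul_group B) = bmul B" "one (mul_group B) = bzero B"
  by (simp_all add: mul_group_def)

locale brc =
  fixes B :: "('a, 'b) brace_scheme" (structure)
  assumes is_br: "is_brace B"
begin

sublocale A: group "add_group B" using is_br by (simp add: is_brace_def)
sublocale M: group "mul_group B" using is_br by (simp add: is_brace_def)

abbreviation pl (infixl "\<boxplus>" 65) where "x \<boxplus> y \<equiv> badd B x y"
abbreviation ml (infixl "\<boxtimes>" 70) where "x \<boxtimes> y \<equiv> bmul B x y"
abbreviation ng where "ng x \<equiv> bneg B x"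
abbreviation mi where "mi x \<equiv> inv\<^bsub>mul_group B\<^esub> x"
abbreviation zr where "zr \<equiv> bzero B"
abbreviation lam where "lam x y \<equiv> blambda B x y"

lemma ng_def': "ng x = inv\<^bsub>add_group B\<^esub> x" by (simp add: bneg_def)

lemma add_closed [simp]: "x \<in> carrier B \<Longrightarrow> y \<in> carrier B \<Longrightarrow> x \<boxplus> y \<in> carrier B"
  using A.m_closed by simp
lemma mul_closed [simp]: "x \<in> carrier B \<Longrightarrow> y \<in> carrier B \<Longrightarrow> x \<boxtimes> y \<in> carrier B"
  using M.m_closed by simp
lemma zr_closed [simp]: "zr \<in> carrier B" using A.one_closed by simp
lemma ng_closed [simp]: "x \<in> carrier B \<Longrightarrow> ng x \<in> carrier B"
  using A.inv_closed by (simp add: ng_def')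
lemma mi_closed [simp]: "x \<in> carrier B \<Longrightarrow> mi x \<in> carrier B"
  using M.inv_closed by simp
lemma add_assoc: "x \<in> carrier B \<Longrightarrow> y \<in> carrier B \<Longrightarrow> z \<in> carrier B \<Longrightarrow> x \<boxplus> y \<boxplus> z = x \<boxplus> (y \<boxplus> z)"
  using A.m_assoc by simp
lemma mul_assoc: "x \<in> carrier B \<Longrightarrow> y \<in> carrier B \<Longrightarrow> z \<in> carrier B \<Longrightarrow> x \<boxtimes> y \<boxtimes> z = x \<boxtimes> (y \<boxtimes> z)"
  using M.m_assoc by simp
lemma add_0 [simp]: "x \<in> carrier B \<Longrightarrow> zr \<boxplus> x = x" "x \<in> carrier B \<Longrightarrow> x \<boxplus> zr = x"
  using A.l_one A.r_one by simp_all
lemma mul_0 [simp]: "x \<in> carrier B \<Longrightarrow> zr \<boxtimes> x = x" "x \<in> carrier B \<Longrightarrow> x \<boxtimes> zr = x"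
  using M.l_one M.r_one by simp_all
lemma ng_add [simp]: "x \<in> carrier B \<Longrightarrow> ng x \<boxplus> x = zr" "x \<in> carrier B \<Longrightarrow> x \<boxplus> ng x = zr"
  using A.l_inv A.r_inv by (simp_all add: ng_def')
lemma mi_mul [simp]: "x \<in> carrier B \<Longrightarrow> mi x \<boxtimes> x = zr" "x \<in> carrier B \<Longrightarrow> x \<boxtimes> mi x = zr"
  using M.l_inv M.r_inv by simp_all
lemma ng_cancel [simp]: "x \<in> carrier B \<Longrightarrow> y \<in> carrier B \<Longrightarrow> ng x \<boxplus> (x \<boxplus> y) = y"
  "x \<in> carrier B \<Longrightarrow> y \<in> carrier B \<Longrightarrow> x \<boxplus> (ng x \<boxplus> y) = y"
  by (simp_all flip: add_assoc)
lemma mi_cancel [simp]: "x \<in> carrier B \<Longrightarrow> y \<in> carrier B \<Longrightarrow> mi x \<boxtimes> (x \<boxtimes> y) = y"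
  "x \<in> carrier B \<Longrightarrow> y \<in> carrier B \<Longrightarrow> x \<boxtimes> (mi x \<boxtimes> y) = y"
  by (simp_all flip: mul_assoc)
lemma ng_cancel_r [simp]: "x \<in> carrier B \<Longrightarrow> y \<in> carrier B \<Longrightarrow> y \<boxplus> x \<boxplus> ng x = y"
  "x \<in> carrier B \<Longrightarrow> y \<in> carrier B \<Longrightarrow> y \<boxplus> ng x \<boxplus> x = y"
  by (simp_all add: add_assoc)
lemma mi_cancel_r [simp]: "x \<in> carrier B \<Longrightarrow> y \<in> carrier B \<Longrightarrow> y \<boxtimes> x \<boxtimes> mi x = y"
  "x \<in> carrier B \<Longrightarrow> y \<in> carrier B \<Longrightarrow> y \<boxtimes> mi x \<boxtimes> x = y"
  by (simp_all add: mul_assoc)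
lemma ng_ng [simp]: "x \<in> carrier B \<Longrightarrow> ng (ng x) = x"
  by (simp add: ng_def')
lemma ng_zr [simp]: "ng zr = zr"
  using A.inv_one by (simp add: ng_def')
lemma ng_plus: "x \<in> carrier B \<Longrightarrow> y \<in> carrier B \<Longrightarrow> ng (x \<boxplus> y) = ng y \<boxplus> ng x"
  using A.inv_mult_group by (simp add: ng_def')
lemma add_left_cancel: "x \<in> carrier B \<Longrightarrow> y \<in> carrier B \<Longrightarrow> z \<in> carrier B \<Longrightarrow> x \<boxplus> y = x \<boxplus> z \<longleftrightarrow> y = z"
  using A.l_cancel[of x y z] by auto
lemma mul_left_cancel: "x \<in> carrier B \<Longrightarrow> y \<in> carrier B \<Longrightarrow> z \<in> carrier B \<Longrightarrow> x \<boxtimes> y = x \<boxtimes> z \<longleftrightarrow> y = z"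
  using M.l_cancel[of x y z] by auto

lemma distr: "a \<in> carrier B \<Longrightarrow> b \<in> carrier B \<Longrightarrow> c \<in> carrier B \<Longrightarrow>
   a \<boxtimes> (b \<boxplus> c) = a \<boxtimes> b \<boxplus> ng a \<boxplus> a \<boxtimes> c"
  using is_br by (simp add: is_brace_def)

lemma lam_def': "lam x y = ng x \<boxplus> x \<boxtimes> y" by (simp add: blambda_def)
lemma lam_closed [simp]: "x \<in> carrier B \<Longrightarrow> y \<in> carrier B \<Longrightarrow> lam x y \<in> carrier B"
  by (simp add: lam_def')
lemma mul_lam: "x \<in> carrier B \<Longrightarrow> y \<in> carrier B \<Longrightarrow> x \<boxtimes> y = x \<boxplus> lam x y"
  by (simp add: lam_def')
lemma lam_add: "x \<in> carrier B \<Longrightarrow> y \<in> carrier B \<Longrightarrow> z \<in> carrier B \<Longrightarrow> lam x (y \<boxplus> z) = lam x y \<boxplus> lam x z"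
  by (simp add: lam_def' distr add_assoc)
lemma lam_zr [simp]: "x \<in> carrier B \<Longrightarrow> lam x zr = zr"
  by (simp add: lam_def')
lemma lam_zr1 [simp]: "y \<in> carrier B \<Longrightarrow> lam zr y = y"
  by (simp add: lam_def')
lemma lam_ng: "x \<in> carrier B \<Longrightarrow> y \<in> carrier B \<Longrightarrow> lam x (ng y) = ng (lam x y)"
proof -
  assume a: "x \<in> carrier B" "y \<in> carrier B"
  have "lam x (ng y) \<boxplus> lam x y = zr" using a by (simp flip: lam_add)
  then show ?thesis using a
    by (metis A.inv_equality add_group_simps lam_closed ng_closed ng_def')
qed
lemma lam_mul: "x \<in> carrier B \<Longrightarrow> y \<in> carrier B \<Longrightarrow> z \<in> carrier B \<Longrightarrow> lam (x \<boxtimes> y) z = lam x (lam y z)"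
proof -
  assume a: "x \<in> carrier B" "y \<in> carrier B" "z \<in> carrier B"
  have "x \<boxtimes> y \<boxplus> lam (x \<boxtimes> y) z = x \<boxtimes> y \<boxtimes> z" using a by (simp add: lam_def')
  also have "\<dots> = x \<boxtimes> (y \<boxplus> lam y z)" using a by (simp add: mul_assoc mul_lam[of y z])
  also have "\<dots> = x \<boxtimes> y \<boxplus> lam x (lam y z)" using a by (simp add: distr add_assoc lam_def'[of x "lam y z"])
  finally show ?thesis using a by (simp add: add_left_cancel)
qed
lemma lam_inv [simp]: "x \<in> carrier B \<Longrightarrow> y \<in> carrier B \<Longrightarrow> lam x (lam (mi x) y) = y"
  "x \<in> carrier B \<Longrightarrow> y \<in> carrier B \<Longrightarrow> lam (mi x) (lam x y) = y"
  by (simp_all flip: lam_mul)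
lemma lam_mi_self: "x \<in> carrier B \<Longrightarrow> lam (mi x) x = ng (mi x)"
  by (simp add: lam_def')

lemma lam_hom: "x \<in> carrier B \<Longrightarrow> lam x \<in> hom (add_group B) (add_group B)"
  by (auto simp: hom_def lam_add)

end

definition cg :: "('a, 'b) brace_scheme \<Rightarrow> 'a set \<Rightarrow> 'a \<Rightarrow> 'a \<Rightarrow> bool" where
  "cg B Z u v \<longleftrightarrow> r_coset (add_group B) Z u = r_coset (add_group B) Z v"

locale brc_id = brc +
  fixes Z :: "'a set"
  assumes idl: "brace_ideal B Z"
begin

lemma Z_sub: "Z \<subseteq> carrier B" using idl by (simp add: brace_ideal_def)
lemma Z_nA: "Z \<lhd> add_group B" using idl by (simp add: brace_ideal_def)
lemma Z_nM: "Z \<lhd> mul_group B" using idl by (simp add: brace_ideal_def)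
lemma Z_lam: "b \<in> carrier B \<Longrightarrow> x \<in> Z \<Longrightarrow> lam b x \<in> Z" using idl by (simp add: brace_ideal_def)

sublocale NA: normal Z "add_group B" by (rule Z_nA)
sublocale NM: normal Z "mul_group B" by (rule Z_nM)

lemma Z_car: "x \<in> Z \<Longrightarrow> x \<in> carrier B" using Z_sub by blast
lemma Z_zr [simp]: "zr \<in> Z" using NA.one_closed by simp
lemma Z_add: "x \<in> Z \<Longrightarrow> y \<in> Z \<Longrightarrow> x \<boxplus> y \<in> Z" using NA.m_closed by simp
lemma Z_ng: "x \<in> Z \<Longrightarrow> ng x \<in> Z" using NA.m_inv_closed by (simp add: ng_def')
lemma Z_mul: "x \<in> Z \<Longrightarrow> y \<in> Z \<Longrightarrow> x \<boxtimes> y \<in> Z" using NM.m_closed by simp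
lemma Z_mi: "x \<in> Z \<Longrightarrow> mi x \<in> Z" using NM.m_inv_closed by simp
lemma Z_conjA: "x \<in> carrier B \<Longrightarrow> h \<in> Z \<Longrightarrow> x \<boxplus> h \<boxplus> ng x \<in> Z"
  using NA.inv_op_closed2 by (simp add: ng_def')
lemma Z_conjM: "x \<in> carrier B \<Longrightarrow> h \<in> Z \<Longrightarrow> x \<boxtimes> h \<boxtimes> mi x \<in> Z"
  using NM.inv_op_closed2 by simp

lemma Z_swapA: "u \<in> carrier B \<Longrightarrow> w \<in> carrier B \<Longrightarrow> w \<boxplus> ng u \<in> Z \<Longrightarrow> ng u \<boxplus> w \<in> Z"
  using Z_conjA[of "ng u" "w \<boxplus> ng u"] by (simp add: add_assoc)
lemma Z_swapA': "u \<in> carrier B \<Longrightarrow> w \<in> carrier B \<Longrightarrow> ng u \<boxplus> w \<in> Z \<Longrightarrow> w \<boxplus> ng u \<in> Z"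
  using Z_conjA[of "u" "ng u \<boxplus> w"] by (simp add: add_assoc)
lemma Z_swapM: "u \<in> carrier B \<Longrightarrow> w \<in> carrier B \<Longrightarrow> w \<boxtimes> mi u \<in> Z \<Longrightarrow> mi u \<boxtimes> w \<in> Z"
  using Z_conjM[of "mi u" "w \<boxtimes> mi u"] by (simp add: mul_assoc)
lemma Z_swapM': "u \<in> carrier B \<Longrightarrow> w \<in> carrier B \<Longrightarrow> mi u \<boxtimes> w \<in> Z \<Longrightarrow> w \<boxtimes> mi u \<in> Z"
  using Z_conjM[of "u" "mi u \<boxtimes> w"] by (simp add: mul_assoc)

lemma lam_AM: "u \<in> carrier B \<Longrightarrow> w \<in> carrier B \<Longrightarrow> lam (mi u) (ng u \<boxplus> w) = mi u \<boxtimes> w"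
  by (simp add: lam_add lam_ng lam_mi_self mul_lam)

lemma AM_iff: "u \<in> carrier B \<Longrightarrow> w \<in> carrier B \<Longrightarrow> w \<boxplus> ng u \<in> Z \<longleftrightarrow> w \<boxtimes> mi u \<in> Z"
proof
  assume a: "u \<in> carrier B" "w \<in> carrier B" "w \<boxplus> ng u \<in> Z"
  then have "ng u \<boxplus> w \<in> Z" by (rule Z_swapA)
  then have "mi u \<boxtimes> w \<in> Z" using Z_lam[of "mi u" "ng u \<boxplus> w"] a by (simp add: lam_AM)
  then show "w \<boxtimes> mi u \<in> Z" using a Z_swapM' by blast
next
  assume a: "u \<in> carrier B" "w \<in> carrier B" "w \<boxtimes> mi u \<in> Z"
  then have "mi u \<boxtimes> w \<in> Z" by (rule Z_swapM)
  then have "lam u (lam (mi u) (ng u \<boxplus> w)) \<in> Z" using Z_lam[of u] a by (simp add: lam_AM)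
  then have "ng u \<boxplus> w \<in> Z" using a by simp
  then show "w \<boxplus> ng u \<in> Z" using a Z_swapA' by blast
qed

abbreviation cs where "cs u \<equiv> Z #>\<^bsub>add_group B\<^esub> u"

lemma cs_mem: "u \<in> carrier B \<Longrightarrow> w \<in> cs u \<longleftrightarrow> w \<in> carrier B \<and> w \<boxplus> ng u \<in> Z"
  using NA.rcos_module[OF A.is_group, of u w] NA.elemrcos_carrier[OF A.is_group, of u w]
  by (auto simp: ng_def')

lemma csM_mem: "u \<in> carrier B \<Longrightarrow> w \<in> Z #>\<^bsub>mul_group B\<^esub> u \<longleftrightarrow> w \<in> carrier B \<and> w \<boxtimes> mi u \<in> Z"
  using NM.rcos_module[OF M.is_group, of u w] NM.elemrcos_carrier[OF M.is_group, of u w]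
  by auto

lemma cs_M: "u \<in> carrier B \<Longrightarrow> Z #>\<^bsub>mul_group B\<^esub> u = cs u"
  using cs_mem csM_mem AM_iff by auto

lemma cg_iff: "u \<in> carrier B \<Longrightarrow> v \<in> carrier B \<Longrightarrow> cg B Z u v \<longleftrightarrow> u \<boxplus> ng v \<in> Z"
proof -
  assume a: "u \<in> carrier B" "v \<in> carrier B"
  have "cg B Z u v \<longleftrightarrow> u \<in> cs v"
    unfolding cg_def using a A.repr_independence[of u Z v] A.rcos_self[of u Z] NA.subgroup_axioms
    by auto
  then show ?thesis using a cs_mem by simp
qed

lemma cg_refl [simp]: "cg B Z u u" by (simp add: cg_def)
lemma cg_sym: "cg B Z u v \<Longrightarrow> cg B Z v u" by (simp add: cg_def)
lemma cg_trans [trans]: "cg B Z u v \<Longrightarrow> cg B Z v w \<Longrightarrow> cg B Z u w" by (simp add: cg_def)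
lemma eq_cg_trans [trans]: "u = v \<Longrightarrow> cg B Z v w \<Longrightarrow> cg B Z u w" by simp
lemma cg_eq_trans [trans]: "cg B Z u v \<Longrightarrow> v = w \<Longrightarrow> cg B Z u w" by simp

lemma cs_add: "u \<in> carrier B \<Longrightarrow> v \<in> carrier B \<Longrightarrow> cs u <#>\<^bsub>add_group B\<^esub> cs v = cs (u \<boxplus> v)"
  using NA.rcos_sum by simp
lemma cs_mul: "u \<in> carrier B \<Longrightarrow> v \<in> carrier B \<Longrightarrow> cs u <#>\<^bsub>mul_group B\<^esub> cs v = cs (u \<boxtimes> v)"
  using NM.rcos_sum[of u v] by (simp add: cs_M)
lemma cs_ng: "u \<in> carrier B \<Longrightarrow> set_inv\<^bsub>add_group B\<^esub> (cs u) = cs (ng u)"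
  using NA.rcos_inv by (simp add: ng_def')
lemma cs_mi: "u \<in> carrier B \<Longrightarrow> set_inv\<^bsub>mul_group B\<^esub> (cs u) = cs (mi u)"
  using NM.rcos_inv[of u] by (simp add: cs_M)

lemma cg_add: "u \<in> carrier B \<Longrightarrow> v \<in> carrier B \<Longrightarrow> u' \<in> carrier B \<Longrightarrow> v' \<in> carrier B \<Longrightarrow>
   cg B Z u v \<Longrightarrow> cg B Z u' v' \<Longrightarrow> cg B Z (u \<boxplus> u') (v \<boxplus> v')"
  unfolding cg_def by (metis cs_add)
lemma cg_mul: "u \<in> carrier B \<Longrightarrow> v \<in> carrier B \<Longrightarrow> u' \<in> carrier B \<Longrightarrow> v' \<in> carrier B \<Longrightarrow>
   cg B Z u v \<Longrightarrow> cg B Z u' v' \<Longrightarrow> cg B Z (u \<boxtimes> u') (v \<boxtimes> v')"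
  unfolding cg_def by (metis cs_mul)
lemma cg_ng: "u \<in> carrier B \<Longrightarrow> v \<in> carrier B \<Longrightarrow> cg B Z u v \<Longrightarrow> cg B Z (ng u) (ng v)"
  unfolding cg_def by (metis cs_ng)
lemma cg_mi: "u \<in> carrier B \<Longrightarrow> v \<in> carrier B \<Longrightarrow> cg B Z u v \<Longrightarrow> cg B Z (mi u) (mi v)"
  unfolding cg_def by (metis cs_mi)
lemma cg_lam: "u \<in> carrier B \<Longrightarrow> v \<in> carrier B \<Longrightarrow> u' \<in> carrier B \<Longrightarrow> v' \<in> carrier B \<Longrightarrow>
   cg B Z u v \<Longrightarrow> cg B Z u' v' \<Longrightarrow> cg B Z (lam u u') (lam v v')"
  unfolding lam_def' by (intro cg_add cg_mul cg_ng) auto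

lemma cg_addL: "u \<in> carrier B \<Longrightarrow> u' \<in> carrier B \<Longrightarrow> v' \<in> carrier B \<Longrightarrow> cg B Z u' v' \<Longrightarrow> cg B Z (u \<boxplus> u') (u \<boxplus> v')"
  by (rule cg_add) auto
lemma cg_addR: "u \<in> carrier B \<Longrightarrow> v \<in> carrier B \<Longrightarrow> u' \<in> carrier B \<Longrightarrow> cg B Z u v \<Longrightarrow> cg B Z (u \<boxplus> u') (v \<boxplus> u')"
  by (rule cg_add) auto
lemma cg_mulL: "u \<in> carrier B \<Longrightarrow> u' \<in> carrier B \<Longrightarrow> v' \<in> carrier B \<Longrightarrow> cg B Z u' v' \<Longrightarrow> cg B Z (u \<boxtimes> u') (u \<boxtimes> v')"
  by (rule cg_mul) auto
lemma cg_mulR: "u \<in> carrier B \<Longrightarrow> v \<in> carrier B \<Longrightarrow> u' \<in> carrier B \<Longrightarrow> cg B Z u v \<Longrightarrow> cg B Z (u \<boxtimes> u') (v \<boxtimes> u')"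
  by (rule cg_mul) auto
lemma cg_addL_cancel: "u \<in> carrier B \<Longrightarrow> u' \<in> carrier B \<Longrightarrow> v' \<in> carrier B \<Longrightarrow> cg B Z (u \<boxplus> u') (u \<boxplus> v') \<Longrightarrow> cg B Z u' v'"
  using cg_addL[of "ng u" "u \<boxplus> u'" "u \<boxplus> v'"] by simp
lemma cg_mulL_cancel: "u \<in> carrier B \<Longrightarrow> u' \<in> carrier B \<Longrightarrow> v' \<in> carrier B \<Longrightarrow> cg B Z (u \<boxtimes> u') (u \<boxtimes> v') \<Longrightarrow> cg B Z u' v'"
  using cg_mulL[of "mi u" "u \<boxtimes> u'" "u \<boxtimes> v'"] by simp

lemma cg_Z: "z \<in> Z \<Longrightarrow> cg B Z z zr"
  using cg_iff[of z zr] Z_car by simp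


lemma add_group_quot: "add_group (quot_brace B Z) = add_group B Mod Z"
  by (simp add: add_group_def quot_brace_def FactGroup_def)

lemma Q_carrier: "carrier (quot_brace B Z) = cs ` carrier B"
  by (auto simp: quot_brace_def RCOSETS_def)
lemma Q_add: "u \<in> carrier B \<Longrightarrow> v \<in> carrier B \<Longrightarrow> badd (quot_brace B Z) (cs u) (cs v) = cs (u \<boxplus> v)"
  by (simp add: quot_brace_def cs_add)
lemma Q_mul: "u \<in> carrier B \<Longrightarrow> v \<in> carrier B \<Longrightarrow> bmul (quot_brace B Z) (cs u) (cs v) = cs (u \<boxtimes> v)"
  by (simp add: quot_brace_def cs_mul)
lemma Q_ng: "u \<in> carrier B \<Longrightarrow> bneg (quot_brace B Z) (cs u) = cs (ng u)"
proof -
  assume u: "u \<in> carrier B"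
  have "cs u \<in> carrier (add_group B Mod Z)" using u by (simp add: FactGroup_def RCOSETS_def) blast
  then show ?thesis using u NA.inv_FactGroup cs_ng by (simp add: bneg_def add_group_quot)
qed
lemma Q_lam: "u \<in> carrier B \<Longrightarrow> v \<in> carrier B \<Longrightarrow> blambda (quot_brace B Z) (cs u) (cs v) = cs (lam u v)"
  by (simp add: blambda_def Q_ng Q_mul Q_add lam_def')

lemma Soc_mod_iff: "x \<in> Soc_mod B Z \<longleftrightarrow> x \<in> carrier B \<and>
   (\<forall>y\<in>carrier B. cg B Z (lam x y) y \<and> cg B Z (x \<boxplus> y) (y \<boxplus> x))"
  by (auto simp: Soc_mod_def Soc_def bcoset_def Q_carrier Q_lam Q_add cg_def)

lemma zeta_mod_iff: "x \<in> zeta_mod B Z \<longleftrightarrow> x \<in> Soc_mod B Z \<and>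
   (\<forall>y\<in>carrier B. cg B Z (x \<boxtimes> y) (y \<boxtimes> x))"
  by (auto simp: Soc_mod_def zeta_mod_def zeta_def Soc_def bcoset_def Q_carrier Q_mul cg_def)


end


context brc_id begin
definition cen where "cen x \<longleftrightarrow> x \<in> carrier B \<and> (\<forall>y\<in>carrier B.
   cg B Z (x \<boxtimes> y) (x \<boxplus> y) \<and> cg B Z (x \<boxplus> y) (y \<boxplus> x) \<and> cg B Z (x \<boxtimes> y) (y \<boxtimes> x))"

lemma zeta_cen: "x \<in> zeta_mod B Z \<longleftrightarrow> cen x"
proof -
  have "x \<in> carrier B \<Longrightarrow> y \<in> carrier B \<Longrightarrow> cg B Z (lam x y) y \<longleftrightarrow> cg B Z (x \<boxtimes> y) (x \<boxplus> y)" for y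
    using cg_addL[of x "lam x y" y] cg_addL_cancel[of x "lam x y" y] by (auto simp: mul_lam)
  then show ?thesis unfolding zeta_mod_iff Soc_mod_iff cen_def by auto
qed

lemma cen_car: "cen a \<Longrightarrow> a \<in> carrier B" by (simp add: cen_def)

lemma cen_D: assumes "cen a" "y \<in> carrier B"
  shows "cg B Z (a \<boxtimes> y) (a \<boxplus> y)" "cg B Z (a \<boxplus> y) (a \<boxtimes> y)" "cg B Z (a \<boxplus> y) (y \<boxplus> a)"
   "cg B Z (y \<boxplus> a) (a \<boxplus> y)" "cg B Z (a \<boxtimes> y) (y \<boxtimes> a)" "cg B Z (y \<boxtimes> a) (a \<boxtimes> y)"
proof -
  have h: "cg B Z (a \<boxtimes> y) (a \<boxplus> y)" "cg B Z (a \<boxplus> y) (y \<boxplus> a)" "cg B Z (a \<boxtimes> y) (y \<boxtimes> a)"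
    using assms unfolding cen_def by blast+
  show "cg B Z (a \<boxtimes> y) (a \<boxplus> y)" "cg B Z (a \<boxplus> y) (a \<boxtimes> y)" "cg B Z (a \<boxplus> y) (y \<boxplus> a)"
   "cg B Z (y \<boxplus> a) (a \<boxplus> y)" "cg B Z (a \<boxtimes> y) (y \<boxtimes> a)" "cg B Z (y \<boxtimes> a) (a \<boxtimes> y)"
    using h cg_sym[OF h(1)] cg_sym[OF h(2)] cg_sym[OF h(3)] by auto
qed

lemma cen_cg: assumes "cen a" "b \<in> carrier B" "cg B Z a b" shows "cen b"
proof -
  have a: "a \<in> carrier B" using assms cen_car by blast
  have ab: "cg B Z b a" using assms cg_sym by blast
  show ?thesis unfolding cen_def
  proof (intro conjI ballI)
    show "b \<in> carrier B" by fact
    fix y assume y: "y \<in> carrier B"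
    have "cg B Z (b \<boxtimes> y) (a \<boxtimes> y)" using ab a y assms by (intro cg_mulR) auto
    also have "cg B Z (a \<boxtimes> y) (a \<boxplus> y)" using assms y by (simp add: cen_def)
    also have "cg B Z (a \<boxplus> y) (b \<boxplus> y)" using assms a y by (intro cg_addR) auto
    finally show "cg B Z (b \<boxtimes> y) (b \<boxplus> y)" .
    have "cg B Z (b \<boxplus> y) (a \<boxplus> y)" using ab a y assms by (intro cg_addR) auto
    also have "cg B Z (a \<boxplus> y) (y \<boxplus> a)" using assms y by (simp add: cen_def)
    also have "cg B Z (y \<boxplus> a) (y \<boxplus> b)" using assms a y by (intro cg_addL) auto
    finally show "cg B Z (b \<boxplus> y) (y \<boxplus> b)" .
    have "cg B Z (b \<boxtimes> y) (a \<boxtimes> y)" using ab a y assms by (intro cg_mulR) auto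
    also have "cg B Z (a \<boxtimes> y) (y \<boxtimes> a)" using assms y by (simp add: cen_def)
    also have "cg B Z (y \<boxtimes> a) (y \<boxtimes> b)" using assms a y by (intro cg_mulL) auto
    finally show "cg B Z (b \<boxtimes> y) (y \<boxtimes> b)" .
  qed
qed

lemma cen_mul: assumes ca: "cen a" and cb: "cen b" shows "cen (a \<boxtimes> b)"
proof -
  have a: "a \<in> carrier B" and b: "b \<in> carrier B" using ca cb cen_car by auto
  have h1: "cg B Z (a \<boxtimes> b) (a \<boxplus> b)" using ca b by (simp add: cen_def)
  have h1': "cg B Z (a \<boxplus> b) (a \<boxtimes> b)" using h1 cg_sym by blast
  show ?thesis unfolding cen_def
  proof (intro conjI ballI)
    show "a \<boxtimes> b \<in> carrier B" using a b by simp
    fix y assume y: "y \<in> carrier B"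
    have "a \<boxtimes> b \<boxtimes> y = a \<boxtimes> (b \<boxtimes> y)" using a b y by (simp add: mul_assoc)
    also have "cg B Z \<dots> (a \<boxplus> (b \<boxtimes> y))" using ca b y by (simp add: cen_def)
    also have "cg B Z \<dots> (a \<boxplus> (b \<boxplus> y))" using cb a b y by (intro cg_addL) (auto simp: cen_def)
    also have "a \<boxplus> (b \<boxplus> y) = a \<boxplus> b \<boxplus> y" using a b y by (simp add: add_assoc)
    also have "cg B Z \<dots> (a \<boxtimes> b \<boxplus> y)" using h1' a b y by (intro cg_addR) auto
    finally show "cg B Z (a \<boxtimes> b \<boxtimes> y) (a \<boxtimes> b \<boxplus> y)" .
    have "cg B Z (a \<boxtimes> b \<boxplus> y) (a \<boxplus> b \<boxplus> y)" using h1 a b y by (intro cg_addR) auto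
    also have "a \<boxplus> b \<boxplus> y = a \<boxplus> (b \<boxplus> y)" using a b y by (simp add: add_assoc)
    also have "cg B Z \<dots> (a \<boxplus> (y \<boxplus> b))" using cb a b y by (intro cg_addL) (auto simp: cen_def)
    also have "a \<boxplus> (y \<boxplus> b) = a \<boxplus> y \<boxplus> b" using a b y by (simp add: add_assoc)
    also have "cg B Z \<dots> (y \<boxplus> a \<boxplus> b)" using ca a b y by (intro cg_addR) (auto simp: cen_def)
    also have "y \<boxplus> a \<boxplus> b = y \<boxplus> (a \<boxplus> b)" using a b y by (simp add: add_assoc)
    also have "cg B Z \<dots> (y \<boxplus> (a \<boxtimes> b))" using h1' a b y by (intro cg_addL) auto
    finally show "cg B Z (a \<boxtimes> b \<boxplus> y) (y \<boxplus> a \<boxtimes> b)" .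
    have "a \<boxtimes> b \<boxtimes> y = a \<boxtimes> (b \<boxtimes> y)" using a b y by (simp add: mul_assoc)
    also have "cg B Z \<dots> (a \<boxtimes> (y \<boxtimes> b))" using cb a b y by (intro cg_mulL) (auto simp: cen_def)
    also have "a \<boxtimes> (y \<boxtimes> b) = a \<boxtimes> y \<boxtimes> b" using a b y by (simp add: mul_assoc)
    also have "cg B Z \<dots> (y \<boxtimes> a \<boxtimes> b)" using ca a b y by (intro cg_mulR) (auto simp: cen_def)
    also have "y \<boxtimes> a \<boxtimes> b = y \<boxtimes> (a \<boxtimes> b)" using a b y by (simp add: mul_assoc)
    finally show "cg B Z (a \<boxtimes> b \<boxtimes> y) (y \<boxtimes> (a \<boxtimes> b))" .
  qed
qed

lemma cen_add: assumes ca: "cen a" and cb: "cen b" shows "cen (a \<boxplus> b)"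
  using cen_cg[OF cen_mul[OF ca cb], of "a \<boxplus> b"] ca cb by (simp add: cen_def)

lemma cen_zr: "cen zr" by (simp add: cen_def)

lemma cen_mi: assumes ca: "cen a" shows "cen (mi a)" "cg B Z (mi a) (ng a)"
proof -
  have a: "a \<in> carrier B" using ca cen_car by auto
  have h: "cg B Z (a \<boxplus> mi a) zr"
  proof -
    have "cg B Z (a \<boxtimes> mi a) (a \<boxplus> mi a)" using ca mi_closed[OF a] unfolding cen_def by blast
    then have "cg B Z (a \<boxplus> mi a) (a \<boxtimes> mi a)" by (rule cg_sym)
    then show ?thesis using a by simp
  qed
  have "mi a = ng a \<boxplus> (a \<boxplus> mi a)" using a by simp
  also have "cg B Z \<dots> (ng a \<boxplus> zr)" using h a by (intro cg_addL) auto
  also have "ng a \<boxplus> zr = ng a" using a by simp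
  finally show hn: "cg B Z (mi a) (ng a)" .
  show "cen (mi a)" unfolding cen_def
  proof (intro conjI ballI)
    show "mi a \<in> carrier B" using a by simp
    fix y assume y: "y \<in> carrier B"
    have "cg B Z (a \<boxtimes> (mi a \<boxtimes> y)) (a \<boxtimes> (mi a \<boxplus> y))"
    proof -
      have "a \<boxtimes> (mi a \<boxtimes> y) = zr \<boxplus> y" using a y by simp
      also have "cg B Z \<dots> (a \<boxplus> mi a \<boxplus> y)" using cg_sym[OF h] a y by (intro cg_addR) auto
      also have "a \<boxplus> mi a \<boxplus> y = a \<boxplus> (mi a \<boxplus> y)" using a y by (simp add: add_assoc)
      also have "cg B Z \<dots> (a \<boxtimes> (mi a \<boxplus> y))" using cen_D[OF ca, of "mi a \<boxplus> y"] a y by simp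
      finally show ?thesis .
    qed
    then show "cg B Z (mi a \<boxtimes> y) (mi a \<boxplus> y)" using cg_mulL_cancel[of a "mi a \<boxtimes> y" "mi a \<boxplus> y"] a y by (meson mi_closed mul_closed add_closed)
    have "cg B Z (mi a \<boxplus> y) (ng a \<boxplus> y)" using hn a y by (intro cg_addR) auto
    also have "ng a \<boxplus> y = ng a \<boxplus> (y \<boxplus> a) \<boxplus> ng a" using a y by (simp add: add_assoc)
    also have "cg B Z \<dots> (ng a \<boxplus> (a \<boxplus> y) \<boxplus> ng a)" using cen_D[OF ca, of y] a y
      by (intro cg_addR cg_addL) auto
    also have "ng a \<boxplus> (a \<boxplus> y) \<boxplus> ng a = y \<boxplus> ng a" using a y by simp
    also have "cg B Z \<dots> (y \<boxplus> mi a)" using cg_sym[OF hn] a y by (intro cg_addL) auto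
    finally show "cg B Z (mi a \<boxplus> y) (y \<boxplus> mi a)" .
    have "mi a \<boxtimes> y = mi a \<boxtimes> (y \<boxtimes> a \<boxtimes> mi a)" using a y by simp
    also have "cg B Z \<dots> (mi a \<boxtimes> (a \<boxtimes> y \<boxtimes> mi a))" using cen_D[OF ca, of y] a y
      by (intro cg_mulR cg_mulL) auto
    also have "mi a \<boxtimes> (a \<boxtimes> y \<boxtimes> mi a) = y \<boxtimes> mi a" using a y by (simp add: mul_assoc)
    finally show "cg B Z (mi a \<boxtimes> y) (y \<boxtimes> mi a)" .
  qed
qed

lemma cen_ng: "cen a \<Longrightarrow> cen (ng a)"
  using cen_cg[OF cen_mi(1), of a "ng a"] cen_mi(2) cen_car by auto

lemma cen_conjA: assumes ca: "cen a" and x: "x \<in> carrier B" shows "cen (x \<boxplus> a \<boxplus> ng x)"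
proof -
  have a: "a \<in> carrier B" using ca cen_car by auto
  have "cg B Z a (a \<boxplus> x \<boxplus> ng x)" using a x by simp
  also have "cg B Z \<dots> (x \<boxplus> a \<boxplus> ng x)" using ca a x by (intro cg_addR) (auto simp: cen_def)
  finally show ?thesis using cen_cg ca a x by simp
qed

lemma cen_conjM: assumes ca: "cen a" and x: "x \<in> carrier B" shows "cen (x \<boxtimes> a \<boxtimes> mi x)"
proof -
  have a: "a \<in> carrier B" using ca cen_car by auto
  have "cg B Z a (a \<boxtimes> x \<boxtimes> mi x)" using a x by simp
  also have "cg B Z \<dots> (x \<boxtimes> a \<boxtimes> mi x)" using ca a x by (intro cg_mulR) (auto simp: cen_def)
  finally show ?thesis using cen_cg ca a x by simp
qed

lemma cen_lam_cg: assumes ca: "cen a" and y: "y \<in> carrier B" shows "cg B Z (lam y a) a"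
proof -
  have a: "a \<in> carrier B" using ca cen_car by auto
  have "y \<boxplus> lam y a = y \<boxtimes> a" using a y by (simp add: mul_lam)
  also have "cg B Z \<dots> (a \<boxtimes> y)" using cen_D[OF ca y] by simp
  also have "cg B Z \<dots> (a \<boxplus> y)" using ca a y by (simp add: cen_def)
  also have "cg B Z \<dots> (y \<boxplus> a)" using ca a y by (simp add: cen_def)
  finally show ?thesis using cg_addL_cancel[of y "lam y a" a] a y by (meson lam_closed)
qed

lemma cen_lam: "cen a \<Longrightarrow> y \<in> carrier B \<Longrightarrow> cen (lam y a)"
  using cen_cg[of a "lam y a"] cg_sym[OF cen_lam_cg[of a y]] cen_car[of a] by simp

lemma cen_Z: "z \<in> Z \<Longrightarrow> cen z"
  using cen_cg[OF cen_zr, of z] cg_sym[OF cg_Z[of z]] Z_car by blast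

lemma Z_sub_zeta: "Z \<subseteq> zeta_mod B Z"
  using cen_Z zeta_cen by blast

lemma zeta_ideal: "brace_ideal B (zeta_mod B Z)"
proof -
  let ?W = "zeta_mod B Z"
  have sub: "?W \<subseteq> carrier B" by (auto simp: zeta_mod_def)
  have sA: "subgroup ?W (add_group B)"
    apply (rule A.subgroupI)
    using sub cen_zr cen_ng cen_add by (auto simp: zeta_cen ng_def'[symmetric])
  have sM: "subgroup ?W (mul_group B)"
    apply (rule M.subgroupI)
    using sub cen_zr cen_mi cen_mul by (auto simp: zeta_cen)
  have nA: "?W \<lhd> add_group B"
    unfolding A.normal_inv_iff using sA cen_conjA by (auto simp: zeta_cen ng_def'[symmetric])
  have nM: "?W \<lhd> mul_group B"
    unfolding M.normal_inv_iff using sM cen_conjM by (auto simp: zeta_cen)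
  show ?thesis unfolding brace_ideal_def using sub nA nM cen_lam by (auto simp: zeta_cen)
qed

lemma zeta_closed_cg: "u \<in> carrier B \<Longrightarrow> v \<in> zeta_mod B Z \<Longrightarrow> cg B Z u v \<Longrightarrow> u \<in> zeta_mod B Z"
  using cen_cg[of v u] cg_sym[of u v] zeta_cen by blast

lemma zeta_lam_cg: "x \<in> zeta_mod B Z \<Longrightarrow> y \<in> carrier B \<Longrightarrow> cg B Z (lam y x) x"
  using cen_lam_cg zeta_cen by blast

end



lemma add_group_sub: "add_group (sub_brace B I) = (add_group B)\<lparr>carrier := I\<rparr>"
  by (simp add: add_group_def sub_brace_def)
lemma mul_group_sub: "mul_group (sub_brace B I) = (mul_group B)\<lparr>carrier := I\<rparr>"
  by (simp add: mul_group_def sub_brace_def)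
lemma sub_simps [simp]: "carrier (sub_brace B I) = I" "badd (sub_brace B I) = badd B"
  "bmul (sub_brace B I) = bmul B" "bzero (sub_brace B I) = bzero B"
  by (simp_all add: sub_brace_def)
lemma cg_sub: "cg (sub_brace B I) = cg B"
  by (simp add: cg_def add_group_def sub_brace_def r_coset_def fun_eq_iff)

context brc
begin

lemma ideal_intro:
  assumes "subgroup I (add_group B)" "subgroup I (mul_group B)"
    "\<And>x h. x \<in> carrier B \<Longrightarrow> h \<in> I \<Longrightarrow> x \<boxplus> h \<boxplus> ng x \<in> I"
    "\<And>x h. x \<in> carrier B \<Longrightarrow> h \<in> I \<Longrightarrow> x \<boxtimes> h \<boxtimes> mi x \<in> I"
    "\<And>b x. b \<in> carrier B \<Longrightarrow> x \<in> I \<Longrightarrow> lam b x \<in> I"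
  shows "brace_ideal B I"
  unfolding brace_ideal_def A.normal_inv_iff M.normal_inv_iff
  using assms subgroup.subset[OF assms(1)] by (simp add: ng_def')

lemma ideal_Int: "brace_ideal B I \<Longrightarrow> brace_ideal B J \<Longrightarrow> brace_ideal B (I \<inter> J)"
proof -
  assume a: "brace_ideal B I" "brace_ideal B J"
  interpret I: brc_id B I by unfold_locales (rule a(1))
  interpret J: brc_id B J by unfold_locales (rule a(2))
  show ?thesis
    apply (rule ideal_intro)
    using A.subgroups_Inter_pair I.NA.subgroup_axioms J.NA.subgroup_axioms apply blast
    using M.subgroups_Inter_pair I.NM.subgroup_axioms J.NM.subgroup_axioms apply blast
    using I.Z_conjA J.Z_conjA I.Z_conjM J.Z_conjM I.Z_lam J.Z_lam by auto
qed

lemma ideal_zero: "brace_ideal B {zr}"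
  using A.one_is_normal M.one_is_normal by (simp add: brace_ideal_def)

lemma ideal_upper_zeta: "brace_ideal B (upper_zeta B k)"
proof (induction k)
  case 0 then show ?case using ideal_zero by simp
next
  case (Suc k)
  interpret Zk: brc_id B "upper_zeta B k" by unfold_locales (rule Suc.IH)
  show ?case using Zk.zeta_ideal by simp
qed

context
  fixes I assumes I: "brace_ideal B I"
begin

interpretation I: brc_id B I by unfold_locales (rule I)

lemma I_sub: "I \<subseteq> carrier B" using I.Z_sub .

lemma bneg_sub: "a \<in> I \<Longrightarrow> bneg (sub_brace B I) a = ng a"
  by (simp add: bneg_def add_group_sub I.NA.subgroup_axioms)

lemma lam_sub: "a \<in> I \<Longrightarrow> b \<in> I \<Longrightarrow> blambda (sub_brace B I) a b = lam a b"
  by (simp add: blambda_def bneg_sub)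

lemma sub_brace_is: "is_brace (sub_brace B I)"
  unfolding is_brace_def
proof (intro conjI ballI)
  show "group (add_group (sub_brace B I))"
    unfolding add_group_sub by (rule A.subgroup_imp_group[OF I.NA.subgroup_axioms])
  show "group (mul_group (sub_brace B I))"
    unfolding mul_group_sub by (rule M.subgroup_imp_group[OF I.NM.subgroup_axioms])
  fix a b c assume "a \<in> carrier (sub_brace B I)" "b \<in> carrier (sub_brace B I)" "c \<in> carrier (sub_brace B I)"
  then show "bmul (sub_brace B I) a (badd (sub_brace B I) b c) =
       badd (sub_brace B I) (badd (sub_brace B I) (bmul (sub_brace B I) a b) (bneg (sub_brace B I) a))
        (bmul (sub_brace B I) a c)"
    using distr I.Z_car by (simp add: bneg_sub)
qed

lemma ideal_sub: assumes K: "brace_ideal B K" "K \<subseteq> I" shows "brace_ideal (sub_brace B I) K"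
proof -
  interpret K: brc_id B K by unfold_locales (rule K(1))
  have nA: "K \<lhd> add_group (sub_brace B I)"
    unfolding add_group_sub by (rule A.normal_restrict_supergroup[OF I.NA.subgroup_axioms K.Z_nA K(2)])
  have nM: "K \<lhd> mul_group (sub_brace B I)"
    unfolding mul_group_sub by (rule M.normal_restrict_supergroup[OF I.NM.subgroup_axioms K.Z_nM K(2)])
  show ?thesis unfolding brace_ideal_def using nA nM K(2) K.Z_lam I.Z_car K.Z_car
    by (auto simp: lam_sub subsetD)
qed

end
end




lemma add_group_quot_gen: "add_group (quot_brace BB J) = add_group BB Mod J"
  by (simp add: add_group_def quot_brace_def FactGroup_def)

lemma add_group_factor: "add_group (factor B J' J) = ((add_group B)\<lparr>carrier := J'\<rparr>) Mod J"
  by (simp add: factor_def add_group_quot_gen add_group_sub)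

lemma carrier_factor: "carrier (factor B J' J) = carrier (((add_group B)\<lparr>carrier := J'\<rparr>) Mod J)"
  by (metis add_group_factor add_group_simps(1))

lemma rcoset_upd: "r_coset (G\<lparr>carrier := S\<rparr>) H a = r_coset G H a"
  by (simp add: r_coset_def)

context brc_id
begin

lemma cg_pow: "u \<in> carrier B \<Longrightarrow> v \<in> carrier B \<Longrightarrow> cg B Z u v \<Longrightarrow>
   cg B Z (u [^]\<^bsub>add_group B\<^esub> (n::int)) (v [^]\<^bsub>add_group B\<^esub> n)"
  unfolding cg_def
  using hom_int_pow[OF NA.r_coset_hom_Mod _ A.is_group NA.factorgroup_is_group] by simp

lemma zeta_iff: "x \<in> zeta_mod B Z \<longleftrightarrow> x \<in> carrier B \<and>
   (\<forall>y\<in>carrier B. cg B Z (lam x y) y \<and> cg B Z (x \<boxplus> y) (y \<boxplus> x) \<and> cg B Z (x \<boxtimes> y) (y \<boxtimes> x))"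
  unfolding zeta_mod_iff Soc_mod_iff by auto

end

context brc
begin

lemma zeta_sub_iff:
  assumes I: "brace_ideal B I" and Z: "brace_ideal (sub_brace B I) Z"
  shows "x \<in> zeta_mod (sub_brace B I) Z \<longleftrightarrow> x \<in> I \<and>
   (\<forall>y\<in>I. cg B Z (lam x y) y \<and> cg B Z (x \<boxplus> y) (y \<boxplus> x) \<and> cg B Z (x \<boxtimes> y) (y \<boxtimes> x))"
proof -
  interpret C: brc_id "sub_brace B I" Z
    by unfold_locales (auto simp: sub_brace_is[OF I] Z)
  show ?thesis unfolding C.zeta_iff by (auto simp: cg_sub lam_sub[OF I])
qed

end




context brc
begin

lemma main_step:
  assumes I: "brace_ideal B I" and cn: "upper_zeta (sub_brace B I) m = I"
    and J: "brace_ideal B J" and J': "brace_ideal B J'" and JJ': "J \<subseteq> J'"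
    and cond: "(infinite (carrier (factor B J' J)) \<and> cyclic_group (add_group (factor B J' J)) \<and> J' \<subseteq> Soc_mod B J)
       \<or> Factorial_Ring.prime (card (carrier (factor B J' J)))"
  shows "I \<inter> J' \<subseteq> zeta_mod (sub_brace B I) (I \<inter> J)"
proof -
  define C where "C = sub_brace B I"
  define K where "K = I \<inter> J"
  have KB: "brace_ideal B K" using ideal_Int[OF I J] K_def by simp
  have KC: "brace_ideal C K" using ideal_sub[OF I KB] K_def C_def by auto
  interpret BI: brc_id B I by unfold_locales (rule I)
  interpret BJ: brc_id B J by unfold_locales (rule J)
  interpret BJ': brc_id B J' by unfold_locales (rule J')
  interpret BK: brc_id B K by unfold_locales (rule KB)
  interpret CK: brc_id C K by unfold_locales (auto simp: C_def sub_brace_is[OF I] KC[unfolded C_def])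
  define W where "W = zeta_mod C K"
  have KW: "K \<subseteq> W" using CK.Z_sub_zeta W_def by simp
  have Wiff: "\<And>x. x \<in> W \<longleftrightarrow> x \<in> I \<and>
     (\<forall>y\<in>I. cg B K (lam x y) y \<and> cg B K (x \<boxplus> y) (y \<boxplus> x) \<and> cg B K (x \<boxtimes> y) (y \<boxtimes> x))"
    using zeta_sub_iff[OF I KC[unfolded C_def]] C_def W_def by simp
  have cgKJ: "\<And>u v. u \<in> I \<Longrightarrow> v \<in> I \<Longrightarrow> cg B K u v \<longleftrightarrow> cg B J u v"
  proof -
    fix u v assume uv: "u \<in> I" "v \<in> I"
    have "u \<boxplus> ng v \<in> I" using BI.Z_add BI.Z_ng uv by blast
    then show "cg B K u v \<longleftrightarrow> cg B J u v" using BK.cg_iff BJ.cg_iff K_def BI.Z_car uv by auto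
  qed
  show ?thesis
  proof (cases "I \<inter> J' \<subseteq> K")
    case True then show ?thesis using KW unfolding C_def K_def W_def by blast
  next
    case False
    define P where "P k \<longleftrightarrow> \<not> (upper_zeta C k \<inter> (I \<inter> J') \<subseteq> K)" for k
    have "P m" using False cn C_def P_def by auto
    then obtain k where Pk: "P k" and kmin: "\<And>j. j < k \<Longrightarrow> \<not> P j"
      using exists_least_iff[of P] by blast
    have "k \<noteq> 0" using Pk by (auto simp: P_def K_def C_def BI.Z_zr BJ.Z_zr)
    then obtain k' where kk: "k = Suc k'" using not0_implies_Suc by blast
    define Z' where "Z' = upper_zeta C k'"

    have Z'C: "brace_ideal C Z'" using CK.ideal_upper_zeta Z'_def by simp
    have Z'min: "Z' \<inter> (I \<inter> J') \<subseteq> K" using kmin[of k'] kk P_def Z'_def by auto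
    from Pk obtain x0 where x0Z: "x0 \<in> zeta_mod C Z'" and x0I: "x0 \<in> I" and x0J': "x0 \<in> J'" and x0K: "x0 \<notin> K"
      by (auto simp: P_def kk Z'_def)
    have x0J: "x0 \<notin> J" using x0I x0K K_def by auto
    have x0B: "x0 \<in> carrier B" using x0I BI.Z_car by blast
    interpret CZ: brc_id C Z' by unfold_locales (rule Z'C)
    have x0W: "x0 \<in> W"
    proof -
      have key: "cg B K u v" if uv: "u \<in> I" "v \<in> I" "cg B Z' u v" "cg B J' u v" for u v
      proof -
        have "badd C u (bneg C v) \<in> Z'" using CZ.cg_iff[of u v] uv by (simp add: C_def cg_sub)
        then have "u \<boxplus> ng v \<in> Z'" using uv by (simp add: C_def bneg_sub[OF I])
        moreover have "u \<boxplus> ng v \<in> J'" using BJ'.cg_iff[of u v] uv BI.Z_car[OF uv(1)] BI.Z_car[OF uv(2)] by simp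
        moreover have "u \<boxplus> ng v \<in> I" using BI.Z_add[OF uv(1) BI.Z_ng[OF uv(2)]] .
        ultimately have "u \<boxplus> ng v \<in> K" using Z'min by blast
        then show "cg B K u v" using BK.cg_iff[of u v] uv BI.Z_car[OF uv(1)] BI.Z_car[OF uv(2)] by simp
      qed
      have z1: "\<forall>y\<in>I. cg B Z' (lam x0 y) y \<and> cg B Z' (x0 \<boxplus> y) (y \<boxplus> x0) \<and> cg B Z' (x0 \<boxtimes> y) (y \<boxtimes> x0)"
        using zeta_sub_iff[OF I Z'C[unfolded C_def]] x0Z unfolding C_def by blast
      have z2: "\<forall>y\<in>carrier B. cg B J' (lam x0 y) y \<and> cg B J' (x0 \<boxplus> y) (y \<boxplus> x0) \<and> cg B J' (x0 \<boxtimes> y) (y \<boxtimes> x0)"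
        using BJ'.zeta_iff[of x0] BJ'.Z_sub_zeta x0J' by blast
      show ?thesis unfolding Wiff
      proof (intro conjI ballI)
        show "x0 \<in> I" by fact
        fix y assume y: "y \<in> I"
        then have yB: "y \<in> carrier B" using BI.Z_car by blast
        have a1: "cg B Z' (lam x0 y) y" "cg B Z' (x0 \<boxplus> y) (y \<boxplus> x0)" "cg B Z' (x0 \<boxtimes> y) (y \<boxtimes> x0)"
          using z1 y by blast+
        have a2: "cg B J' (lam x0 y) y" "cg B J' (x0 \<boxplus> y) (y \<boxplus> x0)" "cg B J' (x0 \<boxtimes> y) (y \<boxtimes> x0)"
          using z2 yB by blast+
        show "cg B K (lam x0 y) y" by (rule key[OF BI.Z_lam[OF x0B y] y a1(1) a2(1)])
        show "cg B K (x0 \<boxplus> y) (y \<boxplus> x0)" by (rule key[OF BI.Z_add[OF x0I y] BI.Z_add[OF y x0I] a1(2) a2(2)])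
        show "cg B K (x0 \<boxtimes> y) (y \<boxtimes> x0)" by (rule key[OF BI.Z_mul[OF x0I y] BI.Z_mul[OF y x0I] a1(3) a2(3)])
      qed
    qed
    define A' where "A' = (add_group B)\<lparr>carrier := J'\<rparr>"
    define F where "F = A' Mod J"
    have gA': "group A'" using A.subgroup_imp_group[OF BJ'.NA.subgroup_axioms] A'_def by simp
    have nJ: "J \<lhd> A'" using A.normal_restrict_supergroup[OF BJ'.NA.subgroup_axioms BJ.Z_nA JJ'] A'_def by simp
    interpret NJ: normal J A' by (rule nJ)
    have gF: "group F" using NJ.factorgroup_is_group F_def by simp
    interpret F: group F by (rule gF)
    define h where "h = (\<lambda>a. J #>\<^bsub>add_group B\<^esub> a)"
    have hhom: "h \<in> hom A' F" using NJ.r_coset_hom_Mod unfolding F_def h_def A'_def rcoset_upd .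
    have carF: "carrier F = h ` J'" using carrier_FactGroup[of A' J] unfolding F_def h_def A'_def rcoset_upd by simp
    have hpow: "h (u [^]\<^bsub>add_group B\<^esub> (n::int)) = h u [^]\<^bsub>F\<^esub> n" if u: "u \<in> J'" for u n
    proof -
      have "h (u [^]\<^bsub>A'\<^esub> n) = h u [^]\<^bsub>F\<^esub> n"
        using hom_int_pow[OF hhom _ gA' gF, of u n] u A'_def by simp
      then show ?thesis using A.int_pow_consistent[OF BJ'.NA.subgroup_axioms u, of n] A'_def by simp
    qed
    have hcg: "\<And>u v. h u = h v \<longleftrightarrow> cg B J u v" by (simp add: h_def cg_def)
    have hcar: "\<And>u. u \<in> J' \<Longrightarrow> h u \<in> carrier F" using carF by blast
    have X0ne: "h x0 \<noteq> \<one>\<^bsub>F\<^esub>"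
    proof
      assume "h x0 = \<one>\<^bsub>F\<^esub>"
      then have "J #>\<^bsub>add_group B\<^esub> x0 = J" by (simp add: h_def F_def)
      then have "x0 \<in> J" using A.rcos_self[of x0 J] x0B BJ.NA.subgroup_axioms by simp
      then show False using x0J by simp
    qed
    have powI: "x0 [^]\<^bsub>add_group B\<^esub> (k::int) \<in> I" for k
      using A.subgroup_int_pow_closed[OF BI.NA.subgroup_axioms x0I] .
    have powJ': "x0 [^]\<^bsub>add_group B\<^esub> (k::int) \<in> J'" for k
      using A.subgroup_int_pow_closed[OF BJ'.NA.subgroup_axioms x0J'] .
    have powW: "x0 [^]\<^bsub>add_group B\<^esub> (k::int) \<in> W" for k
    proof -
      have "brace_ideal C W" using CK.zeta_ideal W_def by simp
      then have sW: "subgroup W (add_group C)" by (simp add: brace_ideal_def normal_imp_subgroup)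
      have "x0 [^]\<^bsub>add_group C\<^esub> k \<in> W" using CK.A.subgroup_int_pow_closed[OF sW] x0W by blast
      then show ?thesis using A.int_pow_consistent[OF BI.NA.subgroup_axioms x0I, of k]
        by (simp add: C_def add_group_sub)
    qed
    have WI: "W \<subseteq> I" using Wiff by blast
    have Wcg: "z \<in> W" if "z \<in> I" "w \<in> W" "cg B K z w" for z w
      using CK.zeta_closed_cg[of z w] that by (simp add: C_def cg_sub W_def)
    show ?thesis
    proof
      fix z assume zIJ: "z \<in> I \<inter> J'"
      then have zI: "z \<in> I" and zJ': "z \<in> J'" by auto
      have zB: "z \<in> carrier B" using zI BI.Z_car by blast
      from cond show "z \<in> zeta_mod (sub_brace B I) (I \<inter> J)"
      proof
        assume p: "Factorial_Ring.prime (card (carrier (factor B J' J)))"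
        then have p': "Factorial_Ring.prime (card (carrier F))" by (simp add: carrier_factor F_def A'_def)
        have fin: "finite (carrier F)" using p' by (metis card.infinite not_prime_0)
        have X0c: "h x0 \<in> carrier F" using hcar x0J' by blast
        have "F.ord (h x0) dvd card (carrier F)" using F.ord_dvd_group_order[OF X0c] by (simp add: order_def)
        moreover have "F.ord (h x0) \<noteq> 1" using F.ord_eq_1[OF X0c] X0ne by simp
        moreover have "\<forall>m. m dvd card (carrier F) \<longrightarrow> m = 1 \<or> m = card (carrier F)"
          using p' by (simp add: prime_nat_iff)
        ultimately have ordX: "F.ord (h x0) = card (carrier F)" by blast
        have gsub: "generate F {h x0} \<subseteq> carrier F" using F.generate_incl X0c by simp
        have "card (generate F {h x0}) = card (carrier F)" using F.generate_pow_card[OF X0c] ordX by simp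
        then have "generate F {h x0} = carrier F" using card_subset_eq[OF fin gsub] by simp
        then have "h z \<in> {h x0 [^]\<^bsub>F\<^esub> (k::int) | k. k \<in> UNIV}" using F.generate_pow[OF X0c] hcar[OF zJ'] by simp
        then obtain k where "h z = h x0 [^]\<^bsub>F\<^esub> (k::int)" by blast
        then have "h z = h (x0 [^]\<^bsub>add_group B\<^esub> k)" using hpow[OF x0J'] by simp
        then have "cg B J z (x0 [^]\<^bsub>add_group B\<^esub> k)" using hcg by simp
        then have "cg B K z (x0 [^]\<^bsub>add_group B\<^esub> k)" using cgKJ[OF zI powI] by simp
        then have "z \<in> W" using Wcg[OF zI powW] by simp
        then show ?thesis by (simp add: W_def C_def K_def)
      next
        assume inf: "infinite (carrier (factor B J' J)) \<and> cyclic_group (add_group (factor B J' J)) \<and> J' \<subseteq> Soc_mod B J"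
        have finf: "infinite (carrier F)" using inf carrier_factor[of B J' J] unfolding F_def A'_def by simp
        have cyc: "cyclic_group F" using inf add_group_factor[of B J' J] unfolding F_def A'_def by simp
        have soc: "J' \<subseteq> Soc_mod B J" using inf by blast
        obtain g where g: "g \<in> carrier F" and gr: "carrier F = range (\<lambda>n::int. g [^]\<^bsub>F\<^esub> n)"
          using cyc F.cyclic_group by blast
        have "carrier (subgroup_generated F {g}) = carrier F"
          using carrier_subgroup_generated[of F "{g}"] F.generate_pow[OF g] g gr by auto
        then have ginj: "\<And>i j::int. g [^]\<^bsub>F\<^esub> i = g [^]\<^bsub>F\<^esub> j \<Longrightarrow> i = j"
          using F.infinite_cyclic_subgroup_int[OF g] finf by simp
        obtain a where a: "h x0 = g [^]\<^bsub>F\<^esub> (a::int)" using hcar[OF x0J'] gr by auto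
        have a0: "a \<noteq> 0"
        proof
          assume "a = 0"
          then have "h x0 = \<one>\<^bsub>F\<^esub>" using a by simp
          then show False using X0ne by blast
        qed
        obtain b where b: "h z = g [^]\<^bsub>F\<^esub> (b::int)" using hcar[OF zJ'] gr by auto
        have e1: "cg B J (z [^]\<^bsub>add_group B\<^esub> a) (x0 [^]\<^bsub>add_group B\<^esub> b)"
        proof -
          have "h (z [^]\<^bsub>add_group B\<^esub> a) = g [^]\<^bsub>F\<^esub> (b * a)" using hpow[OF zJ'] b F.int_pow_pow[OF g] by simp
          moreover have "h (x0 [^]\<^bsub>add_group B\<^esub> b) = g [^]\<^bsub>F\<^esub> (a * b)" using hpow[OF x0J'] a F.int_pow_pow[OF g] by simp
          ultimately have "h (z [^]\<^bsub>add_group B\<^esub> a) = h (x0 [^]\<^bsub>add_group B\<^esub> b)" by (simp add: mult.commute)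
          then show ?thesis using hcg by blast
        qed
        have lampow: "lam y (u [^]\<^bsub>add_group B\<^esub> (n::int)) = lam y u [^]\<^bsub>add_group B\<^esub> n"
          if "y \<in> carrier B" "u \<in> carrier B" for y u n
          using hom_int_pow[OF lam_hom[OF that(1)] _ A.is_group A.is_group, of u n] that by simp
        have lamcg: "cg B J (lam y z) z" if y: "y \<in> I" for y
        proof -
          have yB: "y \<in> carrier B" using y BI.Z_car by blast
          have e2: "cg B J (lam y x0) x0"
          proof -
            have "cg C K (blambda C y x0) x0" using CK.zeta_lam_cg[of x0 y] x0W y by (simp add: W_def C_def)
            then have "cg B K (lam y x0) x0" using lam_sub[OF I y x0I] by (simp add: C_def cg_sub)
            then show ?thesis using cgKJ[OF BI.Z_lam[OF yB x0I] x0I] by simp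
          qed
          have "lam y z [^]\<^bsub>add_group B\<^esub> a = lam y (z [^]\<^bsub>add_group B\<^esub> a)" using lampow yB zB by simp
          also have "cg B J \<dots> (lam y (x0 [^]\<^bsub>add_group B\<^esub> b))"
            using BJ.cg_lam[OF yB yB _ _ BJ.cg_refl e1] A.int_pow_closed[of z a] A.int_pow_closed[of x0 b] zB x0B by simp
          also have "lam y (x0 [^]\<^bsub>add_group B\<^esub> b) = lam y x0 [^]\<^bsub>add_group B\<^esub> b" using lampow yB x0B by simp
          also have "cg B J \<dots> (x0 [^]\<^bsub>add_group B\<^esub> b)" using BJ.cg_pow[OF _ x0B e2] yB x0B by simp
          also have "cg B J \<dots> (z [^]\<^bsub>add_group B\<^esub> a)" using BJ.cg_sym[OF e1] .
          finally have e3: "cg B J (lam y z [^]\<^bsub>add_group B\<^esub> a) (z [^]\<^bsub>add_group B\<^esub> a)" .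
          have lJ': "lam y z \<in> J'" using BJ'.Z_lam[OF yB zJ'] .
          obtain c where c: "h (lam y z) = g [^]\<^bsub>F\<^esub> (c::int)" using hcar[OF lJ'] gr by auto
          have "g [^]\<^bsub>F\<^esub> (c * a) = g [^]\<^bsub>F\<^esub> (b * a)"
          proof -
            have "g [^]\<^bsub>F\<^esub> (c * a) = h (lam y z [^]\<^bsub>add_group B\<^esub> a)" using hpow[OF lJ'] c F.int_pow_pow[OF g] by simp
            also have "\<dots> = h (z [^]\<^bsub>add_group B\<^esub> a)" using e3 hcg by simp
            also have "\<dots> = g [^]\<^bsub>F\<^esub> (b * a)" using hpow[OF zJ'] b F.int_pow_pow[OF g] by simp
            finally show ?thesis .
          qed
          then have "c * a = b * a" by (rule ginj)
          then have "c = b" using a0 by simp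
          then have "h (lam y z) = h z" using b c by simp
          then show ?thesis using hcg by simp
        qed
        have "z \<in> W" unfolding Wiff
        proof (intro conjI ballI)
          show "z \<in> I" by fact
          fix y assume y: "y \<in> I"
          then have yB: "y \<in> carrier B" using BI.Z_car by blast
          have s: "cg B J (lam z y) y" "cg B J (z \<boxplus> y) (y \<boxplus> z)"
            using soc zJ' BJ.Soc_mod_iff[of z] yB by blast+
          show "cg B K (lam z y) y" using s(1) cgKJ[OF BI.Z_lam[OF zB y] y] by simp
          show "cg B K (z \<boxplus> y) (y \<boxplus> z)" using s(2) cgKJ[OF BI.Z_add[OF zI y] BI.Z_add[OF y zI]] by simp
          have "z \<boxtimes> y = z \<boxplus> lam z y" using zB yB by (simp add: mul_lam)
          also have "cg B J \<dots> (z \<boxplus> y)" using BJ.cg_addL[OF zB _ yB s(1)] zB yB by simp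
          also have "cg B J \<dots> (y \<boxplus> z)" by (rule s(2))
          also have "cg B J \<dots> (y \<boxplus> lam y z)" using BJ.cg_addL[OF yB zB _ BJ.cg_sym[OF lamcg[OF y]]] zB yB by simp
          also have "y \<boxplus> lam y z = y \<boxtimes> z" using zB yB by (simp add: mul_lam)
          finally have "cg B J (z \<boxtimes> y) (y \<boxtimes> z)" .
          then show "cg B K (z \<boxtimes> y) (y \<boxtimes> z)" using cgKJ[OF BI.Z_mul[OF zI y] BI.Z_mul[OF y zI]] by simp
        qed
        then show ?thesis by (simp add: W_def C_def K_def)
      qed
    qed
  qed
qed

end

theorem theorem3p36:
  fixes B :: "('a, 'b) brace_scheme" and I :: "'a set"
  assumes "is_brace B"
    and "supersoluble B"
    and "brace_ideal B I"
    and "centrally_nilpotent (sub_brace B I)"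
  shows "B_centrally_nilpotent B I"
proof -
  interpret brc B using assms(1) by unfold_locales
  interpret BI: brc_id B I by unfold_locales (rule assms(3))
  obtain n Js where Js0: "Js 0 = {bzero B}" and Jsn: "Js n = carrier B"
    and idl: "\<forall>i\<le>n. brace_ideal B (Js i)"
    and st: "\<forall>i<n. Js i \<subseteq> Js (Suc i) \<and>
           ((infinite (carrier (factor B (Js (Suc i)) (Js i))) \<and>
             cyclic_group (add_group (factor B (Js (Suc i)) (Js i))) \<and>
             Js (Suc i) \<subseteq> Soc_mod B (Js i))
            \<or> Factorial_Ring.prime (card (carrier (factor B (Js (Suc i)) (Js i)))))"
    using assms(2) unfolding supersoluble_def by blast
  obtain m where cn: "upper_zeta (sub_brace B I) m = I"
    using assms(4) unfolding centrally_nilpotent_def by auto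
  define Is where "Is = (\<lambda>i. I \<inter> Js i)"
  have h1: "Is 0 = {bzero B}" using Js0 BI.Z_zr by (auto simp: Is_def)
  have h2: "Is n = I" using Jsn BI.Z_sub by (auto simp: Is_def)
  have h3: "\<forall>i\<le>n. brace_ideal B (Is i)"
    using idl ideal_Int[OF assms(3)] by (simp add: Is_def)
  have h4: "\<forall>i<n. Is i \<subseteq> Is (Suc i) \<and> Is (Suc i) \<subseteq> zeta_mod (sub_brace B I) (Is i)"
  proof (intro allI impI conjI)
    fix i assume i: "i < n"
    note c = st[rule_format, OF i]
    have i1: "brace_ideal B (Js i)" using idl i by simp
    have i2: "brace_ideal B (Js (Suc i))" using idl i by simp
    show "Is i \<subseteq> Is (Suc i)" using conjunct1[OF c] by (auto simp: Is_def)
    show "Is (Suc i) \<subseteq> zeta_mod (sub_brace B I) (Is i)"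
      unfolding Is_def by (rule main_step[OF assms(3) cn i1 i2 conjunct1[OF c] conjunct2[OF c]])
  qed
  show ?thesis unfolding B_centrally_nilpotent_def
    by (rule exI[of _ n], rule exI[of _ Is]) (use h1 h2 h3 h4 in blast)
qed


end
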